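(* Let $\alpha=1-e^{-\lambda\xi T}$ and let $U,B>0$ be constants such that for every measurable $f:\mathbb{R}\times[0,T]\to[0,\infty)$ with $|f(z,t)-f(\tilde z,t)|\le|z-\tilde z|$ for all $z,\tilde z\in\mathbb{R}$, $t\in[0,T]$, one has $\sup_{t\in[0,T]}Jf(0,t)\le U+\alpha\big(\sup_{t\in[0,T]}f(0,t)+B/\xi\big)$. Let $M_n:=\sup_{t\in[0,T]}v_n(0,t)$ for $n\ge0$. Then for all $n\ge 0$, $$M_n<M_\infty:=\frac{U}{1-\alpha}+\frac{\alpha}{1-\alpha}\frac{B}{\xi}+K_1<\infty.$$
   Context: Fix constants $r>0$, $\sigma>0$, $\lambda>0$, $T>0$, $K_1\ge 0$ and $\zeta\in\{-1,1\}$. Let $\nu$ be a probability measure on $(0,\infty)$ with $\xi:=\int_{(0,\infty)}y\,\nu(dy)<\infty$, and set $\mu:=\lambda(\xi-1)$. For $t\in[0,T]$ let $q_t:=\frac{1}{rT}(1-e^{-r(T-t)})$. On a probability space with probability measure $\mathbb{Q}$ carrying a standard Brownian motion $W$, for $t\in[0,T]$ and $z\in\mathbb{R}$ let $Z^{t,z}=(Z^{t,z}_s)_{0\le s\le T-t}$ be the solution of $dZ^{t,z}_s=-\mu(q_{t+s}-Z^{t,z}_s)\,ds+\sigma(q_{t+s}-Z^{t,z}_s)\,dW_s$, $Z^{t,z}_0=z$. For measurable $f:\mathbb{R}\times[0,T]\to[0,\infty)$ define $$Pf(z,t):=\int_{(0,\infty)} f\Big(\frac{z}{y}+q_t\frac{y-1}{y},t\Big)\,y\,\nu(dy),$$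 $$Jf(z,t):=\mathbb{E}^{\mathbb{Q}}\Big\{e^{-\lambda\xi(T-t)}\big(\zeta(Z^{t,z}_{T-t}-K_1)\big)^++\int_0^{T-t}e^{-\lambda\xi s}\lambda\, Pf(Z^{t,z}_s,t+s)\,ds\Big\}.$$ Define $v_0(z,t):=(\zeta(z-K_1))^+$ and $v_{n+1}:=Jv_n$ for $n\ge0$. (Such constants $U,B$ exist; the paper establishes this.) *)

theory Defs
  imports "HOL-Probability.Probability"
begin

definition std_BM :: "'a measure \<Rightarrow> (real \<Rightarrow> 'a \<Rightarrow> real) \<Rightarrow> bool" where
  "std_BM M W \<longleftrightarrow> prob_space M
     \<and> (\<forall>t. W t \<in> borel_measurable M)
     \<and> (\<forall>\<omega>\<in>space M. W 0 \<omega> = 0 \<and> continuous_on {0..} (\<lambda>t. W t \<omega>))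
     \<and> (\<forall>s t. 0 \<le> s \<longrightarrow> s < t \<longrightarrow>
          distributed M lborel (\<lambda>\<omega>. W t \<omega> - W s \<omega>)
            (\<lambda>x. ennreal (normal_density 0 (sqrt (t - s)) x)))
     \<and> (\<forall>ts :: real list. sorted_wrt (<) ts \<longrightarrow> (\<forall>u\<in>set ts. 0 \<le> u) \<longrightarrow>
          prob_space.indep_vars M (\<lambda>_. borel)
            (\<lambda>i \<omega>. W (ts ! Suc i) \<omega> - W (ts ! i) \<omega>) {..<length ts - 1})"

definition qf :: "real \<Rightarrow> real \<Rightarrow> real \<Rightarrow> real" where
  "qf r T t = (1 - exp (- r * (T - t))) / (r * T)"

definition dqf :: "real \<Rightarrow> real \<Rightarrow> real \<Rightarrow> real" where
  "dqf r T t = - exp (- r * (T - t)) / T"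

definition xi :: "real measure \<Rightarrow> real" where
  "xi \<nu> = (\<integral>y. y \<partial>\<nu>)"

definition muc :: "real \<Rightarrow> real measure \<Rightarrow> real" where
  "muc lam \<nu> = lam * (xi \<nu> - 1)"

text \<open>The (pathwise, strong) solution Z^{t,z}_s of the linear SDE
  dZ_s = -mu (q_{t+s} - Z_s) ds + sigma (q_{t+s} - Z_s) dW_s, Z_0 = z,
  written explicitly: with Phi_s = exp((mu - sigma^2/2) s - sigma W_s),
  Z_s = q_{t+s} - Phi_s (q_t - z + int_0^s q'(t+u) / Phi_u du).\<close>
definition Phi :: "real \<Rightarrow> real \<Rightarrow> (real \<Rightarrow> 'a \<Rightarrow> real) \<Rightarrow> real \<Rightarrow> 'a \<Rightarrow> real" where
  "Phi m \<sigma> W s \<omega> = exp ((m - \<sigma>\<^sup>2 / 2) * s - \<sigma> * W s \<omega>)"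

definition Zsol :: "real \<Rightarrow> real \<Rightarrow> real \<Rightarrow> real \<Rightarrow> real measure \<Rightarrow> (real \<Rightarrow> 'a \<Rightarrow> real)
    \<Rightarrow> real \<Rightarrow> real \<Rightarrow> real \<Rightarrow> 'a \<Rightarrow> real" where
  "Zsol r \<sigma> lam T \<nu> W t z s \<omega> =
     qf r T (t + s) - Phi (muc lam \<nu>) \<sigma> W s \<omega> *
       (qf r T t - z + (LINT u:{0..s}|lborel. dqf r T (t + u) / Phi (muc lam \<nu>) \<sigma> W u \<omega>))"

definition Pop :: "real \<Rightarrow> real \<Rightarrow> real measure \<Rightarrow> (real \<Rightarrow> real \<Rightarrow> real) \<Rightarrow> real \<Rightarrow> real \<Rightarrow> real" where
  "Pop r T \<nu> f z t = (\<integral>y. f (z / y + qf r T t * (y - 1) / y) t * y \<partial>\<nu>)"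

definition Jop :: "real \<Rightarrow> real \<Rightarrow> real \<Rightarrow> real \<Rightarrow> real \<Rightarrow> real \<Rightarrow> real measure \<Rightarrow> 'a measure
    \<Rightarrow> (real \<Rightarrow> 'a \<Rightarrow> real) \<Rightarrow> (real \<Rightarrow> real \<Rightarrow> real) \<Rightarrow> real \<Rightarrow> real \<Rightarrow> real" where
  "Jop r \<sigma> lam T K1 \<zeta> \<nu> M W f z t =
     (\<integral>\<omega>. exp (- lam * xi \<nu> * (T - t)) * max 0 (\<zeta> * (Zsol r \<sigma> lam T \<nu> W t z (T - t) \<omega> - K1))
        + (LINT s:{0..T - t}|lborel.
             exp (- lam * xi \<nu> * s) * lam * Pop r T \<nu> f (Zsol r \<sigma> lam T \<nu> W t z s \<omega>) (t + s)) \<partial>M)"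

definition vseq :: "real \<Rightarrow> real \<Rightarrow> real \<Rightarrow> real \<Rightarrow> real \<Rightarrow> real \<Rightarrow> real measure \<Rightarrow> 'a measure
    \<Rightarrow> (real \<Rightarrow> 'a \<Rightarrow> real) \<Rightarrow> nat \<Rightarrow> real \<Rightarrow> real \<Rightarrow> real" where
  "vseq r \<sigma> lam T K1 \<zeta> \<nu> M W n =
     (Jop r \<sigma> lam T K1 \<zeta> \<nu> M W ^^ n) (\<lambda>z t. max 0 (\<zeta> * (z - K1)))"

end

theory Submission
  imports Defs
begin


lemma integral_lipschitz:
  fixes h :: "real \<Rightarrow> 'm \<Rightarrow> real" and G :: "'m \<Rightarrow> real"
  assumes meas: "\<And>z. h z \<in> borel_measurable N"
    and gi: "integrable N G"
    and lip: "\<And>z z'. AE x in N. \<bar>h z x - h z' x\<bar> \<le> G x * \<bar>z - z'\<bar>"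
  shows "\<bar>integral\<^sup>L N (h z) - integral\<^sup>L N (h z')\<bar> \<le> integral\<^sup>L N G * \<bar>z - z'\<bar>"
proof -
  have Gnn: "AE x in N. 0 \<le> G x"
    using lip[of 0 1] by eventually_elim (auto intro: order_trans)
  have transfer: "integrable N (h b)" if "integrable N (h a)" for a b
  proof (rule Bochner_Integration.integrable_bound[where f="\<lambda>x. \<bar>h a x\<bar> + G x * \<bar>b - a\<bar>"])
    show "integrable N (\<lambda>x. \<bar>h a x\<bar> + G x * \<bar>b - a\<bar>)"
      using that gi by auto
    show "h b \<in> borel_measurable N" by (rule meas)
    show "AE x in N. norm (h b x) \<le> norm (\<bar>h a x\<bar> + G x * \<bar>b - a\<bar>)"
      using lip[of b a] Gnn by eventually_elim auto
  qed
  show ?thesis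
  proof (cases "integrable N (h z)")
    case True
    then have i2: "integrable N (h z')" by (rule transfer)
    have "\<bar>integral\<^sup>L N (h z) - integral\<^sup>L N (h z')\<bar> = \<bar>\<integral>x. h z x - h z' x \<partial>N\<bar>"
      using True i2 by simp
    also have "\<dots> \<le> (\<integral>x. \<bar>h z x - h z' x\<bar> \<partial>N)"
      by (rule integral_abs_bound)
    also have "\<dots> \<le> (\<integral>x. G x * \<bar>z - z'\<bar> \<partial>N)"
      using True i2 gi lip[of z z'] by (intro integral_mono_AE) auto
    also have "\<dots> = integral\<^sup>L N G * \<bar>z - z'\<bar>" by simp
    finally show ?thesis .
  next
    case False
    then have "\<not> integrable N (h z')" using transfer by blast
    then show ?thesis using False not_integrable_integral_eq[of N "h z"]
        not_integrable_integral_eq[of N "h z'"] integral_nonneg_AE[OF Gnn] by simp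
  qed
qed

lemma normal_mgf:
  assumes v: "v > 0"
  shows "(\<integral>\<^sup>+x. ennreal (normal_density 0 v x) * ennreal (exp (a * x)) \<partial>lborel) = ennreal (exp (a\<^sup>2 * v\<^sup>2 / 2))"
proof -
  have eq: "normal_density 0 v x * exp (a * x) = exp (a\<^sup>2 * v\<^sup>2 / 2) * normal_density (a * v\<^sup>2) v x" for x
  proof -
    have "-(x - 0)\<^sup>2 / (2 * v\<^sup>2) + a * x = a\<^sup>2 * v\<^sup>2 / 2 + (-(x - a * v\<^sup>2)\<^sup>2 / (2 * v\<^sup>2))"
      using v by (simp add: field_simps power2_eq_square)
    then show ?thesis unfolding normal_density_def
      by (simp add: exp_add[symmetric] mult_ac)
  qed
  have "(\<integral>\<^sup>+x. ennreal (normal_density 0 v x) * ennreal (exp (a * x)) \<partial>lborel)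
      = (\<integral>\<^sup>+x. ennreal (exp (a\<^sup>2 * v\<^sup>2 / 2)) * ennreal (normal_density (a * v\<^sup>2) v x) \<partial>lborel)"
    by (intro nn_integral_cong) (simp add: ennreal_mult[symmetric] eq)
  also have "\<dots> = ennreal (exp (a\<^sup>2 * v\<^sup>2 / 2)) * (\<integral>\<^sup>+x. ennreal (normal_density (a * v\<^sup>2) v x) \<partial>lborel)"
    by (rule nn_integral_cmult) simp
  also have "(\<integral>\<^sup>+x. ennreal (normal_density (a * v\<^sup>2) v x) \<partial>lborel) = 1"
    using v by (subst nn_integral_eq_integral) (auto simp: integral_normal_density integrable_normal_density)
  finally show ?thesis by simp
qed



locale model =
  fixes r \<sigma> lam T K1 \<zeta> :: real and \<nu> :: "real measure" and M :: "'a measure"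
    and W :: "real \<Rightarrow> 'a \<Rightarrow> real"
  assumes r: "r > 0" and sig: "\<sigma> > 0" and lam: "lam > 0" and T: "T > 0" and K1: "K1 \<ge> 0"
    and zeta: "\<zeta> \<in> {-1, 1}"
    and nu_prob: "prob_space \<nu>" and nu_sets: "sets \<nu> = sets borel" and nu_neg: "emeasure \<nu> {..0} = 0"
    and nu_int: "integrable \<nu> (\<lambda>y. y)" and BM: "std_BM M W"
begin

lemma M_prob: "prob_space M" using BM by (simp add: std_BM_def)

lemma W_meas[measurable]: "W t \<in> borel_measurable M" using BM by (simp add: std_BM_def)

lemma W0: "\<omega> \<in> space M \<Longrightarrow> W 0 \<omega> = 0" using BM by (simp add: std_BM_def)

lemma W_cont: "\<omega> \<in> space M \<Longrightarrow> continuous_on {0..} (\<lambda>t. W t \<omega>)" using BM by (simp add: std_BM_def)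

lemma W_distr: "0 \<le> s \<Longrightarrow> s < t \<Longrightarrow> distributed M lborel (\<lambda>\<omega>. W t \<omega> - W s \<omega>)
            (\<lambda>x. ennreal (normal_density 0 (sqrt (t - s)) x))" using BM by (simp add: std_BM_def)

definition Wc :: "real \<Rightarrow> 'a \<Rightarrow> real" where "Wc s \<omega> = W (max 0 s) \<omega>"

lemma Wc_meas: "(\<lambda>p. Wc (fst p) (snd p)) \<in> borel_measurable (borel \<Otimes>\<^sub>M M)"
proof (rule borel_measurable_LIMSEQ_real[where u="\<lambda>n p. W (max 0 (real_of_int \<lceil>real (Suc n) * fst p\<rceil> / real (Suc n))) (snd p)"])
  fix n
  show "(\<lambda>p. W (max 0 (real_of_int \<lceil>real (Suc n) * fst p\<rceil> / real (Suc n))) (snd p)) \<in> borel_measurable (borel \<Otimes>\<^sub>M M)"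
    by (rule measurable_compose_countable'[where I=UNIV and g="\<lambda>p. \<lceil>real (Suc n) * fst p\<rceil>"
          and f="\<lambda>i p. W (max 0 (real_of_int i / real (Suc n))) (snd p)"]) auto
next
  fix p :: "real \<times> 'a" assume "p \<in> space (borel \<Otimes>\<^sub>M M)"
  then have om: "snd p \<in> space M" by (auto simp: space_pair_measure)
  define s where "s = fst p"
  define c where "c n = real_of_int \<lceil>real (Suc n) * s\<rceil> / real (Suc n)" for n
  have lo: "s \<le> c n" for n
  proof -
    have "real (Suc n) * s \<le> real_of_int \<lceil>real (Suc n) * s\<rceil>" by (rule le_of_int_ceiling)
    then show ?thesis unfolding c_def by (simp add: field_simps)
  qed
  have hi: "c n \<le> s + 1 / real (Suc n)" for n
  proof -
    have "real_of_int \<lceil>real (Suc n) * s\<rceil> \<le> real (Suc n) * s + 1"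
      using ceiling_correct[of "real (Suc n) * s"] by linarith
    then have "c n \<le> (real (Suc n) * s + 1) / real (Suc n)"
      unfolding c_def by (intro divide_right_mono) auto
    also have "\<dots> = s + 1 / real (Suc n)" by (simp add: field_simps)
    finally show ?thesis .
  qed
  have "(\<lambda>n. s + 1 / real (Suc n)) \<longlonglongrightarrow> s + 0"
    by (intro tendsto_add tendsto_const LIMSEQ_inverse_real_of_nat[unfolded inverse_eq_divide])
  then have "c \<longlonglongrightarrow> s"
    using lo hi by (intro tendsto_sandwich[of "\<lambda>_. s" c sequentially "\<lambda>n. s + 1 / real (Suc n)"]) auto
  then have "(\<lambda>n. max 0 (c n)) \<longlonglongrightarrow> max 0 s"
    by (intro tendsto_max tendsto_const)
  then have "(\<lambda>n. W (max 0 (c n)) (snd p)) \<longlonglongrightarrow> W (max 0 s) (snd p)"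
    by (rule continuous_on_tendsto_compose[OF W_cont[OF om]]) auto
  then show "(\<lambda>n. W (max 0 (real_of_int \<lceil>real (Suc n) * fst p\<rceil> / real (Suc n))) (snd p)) \<longlonglongrightarrow> Wc (fst p) (snd p)"
    unfolding c_def s_def Wc_def .
qed

lemma Wc_meas'[measurable (raw)]:
  assumes "f \<in> borel_measurable N" "g \<in> measurable N M"
  shows "(\<lambda>x. Wc (f x) (g x)) \<in> borel_measurable N"
  using measurable_compose[OF measurable_Pair[OF assms] Wc_meas] by simp

lemma Wc_cont: "\<omega> \<in> space M \<Longrightarrow> continuous_on UNIV (\<lambda>s. Wc s \<omega>)"
  unfolding Wc_def
  by (rule continuous_on_compose2[OF W_cont]) (auto intro!: continuous_intros)

lemma E_exp_W:
  assumes s: "0 \<le> s"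
  shows "(\<integral>\<^sup>+\<omega>. ennreal (exp (a * Wc s \<omega>)) \<partial>M) = ennreal (exp (a\<^sup>2 * s / 2))"
proof (cases "s = 0")
  case True
  interpret prob_space M by (rule M_prob)
  have "(\<integral>\<^sup>+\<omega>. ennreal (exp (a * Wc s \<omega>)) \<partial>M) = (\<integral>\<^sup>+\<omega>. 1 \<partial>M)"
    by (intro nn_integral_cong) (simp add: Wc_def True W0)
  then show ?thesis using True by (simp add: emeasure_space_1)
next
  case False
  then have sp: "0 < s" using s by simp
  have "(\<integral>\<^sup>+x. ennreal (normal_density 0 (sqrt (s - 0)) x) * ennreal (exp (a * x)) \<partial>lborel)
      = (\<integral>\<^sup>+\<omega>. ennreal (exp (a * (W s \<omega> - W 0 \<omega>))) \<partial>M)"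
    by (rule distributed_nn_integral[OF W_distr[OF order_refl sp]]) simp
  also have "\<dots> = (\<integral>\<^sup>+\<omega>. ennreal (exp (a * Wc s \<omega>)) \<partial>M)"
    by (intro nn_integral_cong) (simp add: Wc_def W0 s)
  finally show ?thesis using normal_mgf[of "sqrt s" a] sp by simp
qed


abbreviation "mu \<equiv> muc lam \<nu>"
abbreviation "Ph \<equiv> Phi mu \<sigma> Wc"

lemma Ph_pos: "Ph s \<omega> > 0" by (simp add: Phi_def)

lemma Ph_nn[simp]: "Ph s \<omega> \<ge> 0" by (simp add: Phi_def)

lemma Ph_meas[measurable (raw)]:
  assumes [measurable]: "f \<in> borel_measurable N" "g \<in> measurable N M"
  shows "(\<lambda>x. Ph (f x) (g x)) \<in> borel_measurable N"
  unfolding Phi_def by measurable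

lemma E_Ph:
  assumes s: "0 \<le> s"
  shows "(\<integral>\<^sup>+\<omega>. ennreal (Ph s \<omega>) \<partial>M) = ennreal (exp (mu * s))"
proof -
  have "(\<integral>\<^sup>+\<omega>. ennreal (Ph s \<omega>) \<partial>M)
      = (\<integral>\<^sup>+\<omega>. ennreal (exp ((mu - \<sigma>\<^sup>2 / 2) * s)) * ennreal (exp ((- \<sigma>) * Wc s \<omega>)) \<partial>M)"
    by (intro nn_integral_cong) (simp add: Phi_def ennreal_mult[symmetric] mult_exp_exp)
  also have "\<dots> = ennreal (exp ((mu - \<sigma>\<^sup>2 / 2) * s)) * (\<integral>\<^sup>+\<omega>. ennreal (exp ((- \<sigma>) * Wc s \<omega>)) \<partial>M)"
    by (rule nn_integral_cmult) measurable
  also have "\<dots> = ennreal (exp ((mu - \<sigma>\<^sup>2 / 2) * s)) * ennreal (exp ((- \<sigma>)\<^sup>2 * s / 2))"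
    by (simp only: E_exp_W[OF s])
  also have "\<dots> = ennreal (exp (mu * s))"
    by (simp add: ennreal_mult[symmetric] exp_add[symmetric] field_simps power2_eq_square)
  finally show ?thesis .
qed

lemma L_meas:
  "(\<lambda>q. LINT u:{0..fst (snd q)}|lborel. dqf r T (fst q + u) / Ph u (snd (snd q)))
     \<in> borel_measurable (borel \<Otimes>\<^sub>M (borel \<Otimes>\<^sub>M M))"
proof -
  define F where "F q u = (if 0 \<le> u \<and> u \<le> fst (snd q) then 1 else 0) * (dqf r T (fst q + u) / Ph u (snd (snd q)))"
    for q :: "real \<times> real \<times> 'a" and u :: real
  have m: "(\<lambda>x. F (fst x) (snd x)) \<in> borel_measurable ((borel \<Otimes>\<^sub>M (borel \<Otimes>\<^sub>M M)) \<Otimes>\<^sub>M lborel)"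
    apply (subst measurable_cong_sets[OF sets_pair_measure_cong[OF refl sets_lborel] refl])
    unfolding F_def dqf_def by measurable
  have "(\<lambda>q. \<integral>u. F q u \<partial>lborel) \<in> borel_measurable (borel \<Otimes>\<^sub>M (borel \<Otimes>\<^sub>M M))"
    by (rule lborel.borel_measurable_lebesgue_integral) (simp add: split_beta' m)
  moreover have "(\<lambda>q. \<integral>u. F q u \<partial>lborel) = (\<lambda>q. LINT u:{0..fst (snd q)}|lborel. dqf r T (fst q + u) / Ph u (snd (snd q)))"
    by (auto simp: F_def set_lebesgue_integral_def indicator_def intro!: ext Bochner_Integration.integral_cong)
  ultimately show ?thesis by simp
qed

lemma Zsol_meas[measurable (raw)]:
  assumes [measurable]: "t \<in> borel_measurable N" "z \<in> borel_measurable N" "s \<in> borel_measurable N"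
    "w \<in> measurable N M"
  shows "(\<lambda>x. Zsol r \<sigma> lam T \<nu> Wc (t x) (z x) (s x) (w x)) \<in> borel_measurable N"
proof -
  have L: "(\<lambda>x. LINT u:{0..s x}|lborel. dqf r T (t x + u) / Ph u (w x)) \<in> borel_measurable N"
    using measurable_compose[OF _ L_meas, of "\<lambda>x. (t x, s x, w x)" N] by (simp add: measurable_Pair)
  show ?thesis unfolding Zsol_def qf_def
    by (measurable) (rule L)
qed


lemma g_meas:
  assumes gm: "case_prod g \<in> borel_measurable (borel :: (real \<times> real) measure)"
    and a: "a \<in> borel_measurable N" and b: "b \<in> borel_measurable N"
  shows "(\<lambda>x. g (a x) (b x) :: real) \<in> borel_measurable N"
  using measurable_compose[OF measurable_Pair[OF a b], of "case_prod g" borel] gm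
  by (simp add: borel_prod)

lemma Pop_meas:
  assumes gm: "case_prod g \<in> borel_measurable (borel :: (real \<times> real) measure)"
  shows "(\<lambda>p. Pop r T \<nu> g (fst p) (snd p)) \<in> borel_measurable (borel \<Otimes>\<^sub>M borel)"
proof -
  note gm'[measurable (raw)] = g_meas[OF gm]
  interpret nu: prob_space \<nu> by (rule nu_prob)
  have m: "(\<lambda>x. g (fst (fst x) / snd x + qf r T (snd (fst x)) * (snd x - 1) / snd x) (snd (fst x)) * snd x)
      \<in> borel_measurable ((borel \<Otimes>\<^sub>M borel) \<Otimes>\<^sub>M \<nu>)"
    apply (subst measurable_cong_sets[OF sets_pair_measure_cong[OF refl nu_sets] refl])
    unfolding qf_def by measurable
  show ?thesis unfolding Pop_def
    by (rule nu.borel_measurable_lebesgue_integral) (simp add: split_beta' m)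
qed

lemma Pop_meas'[measurable (raw)]:
  assumes gm: "case_prod g \<in> borel_measurable (borel :: (real \<times> real) measure)"
    and a: "a \<in> borel_measurable N" and b: "b \<in> borel_measurable N"
  shows "(\<lambda>x. Pop r T \<nu> g (a x) (b x)) \<in> borel_measurable N"
  using measurable_compose[OF measurable_Pair[OF a b] Pop_meas[OF gm]] by simp

lemma Jop_meas:
  assumes gm: "case_prod g \<in> borel_measurable (borel :: (real \<times> real) measure)"
  shows "case_prod (Jop r \<sigma> lam T K1 \<zeta> \<nu> M Wc g) \<in> borel_measurable (borel :: (real \<times> real) measure)"
proof -
  note gm'[measurable (raw)] = Pop_meas'[OF gm]
  interpret Mp: prob_space M by (rule M_prob)
  define F where "F q s = (if 0 \<le> s \<and> s \<le> T - fst (snd q) then 1 else 0) *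
     (exp (- lam * xi \<nu> * s) * lam * Pop r T \<nu> g (Zsol r \<sigma> lam T \<nu> Wc (fst (snd q)) (fst q) s (snd (snd q))) (fst (snd q) + s))"
    for q :: "real \<times> real \<times> 'a" and s :: real
  have m: "(\<lambda>x. F (fst x) (snd x)) \<in> borel_measurable ((borel \<Otimes>\<^sub>M (borel \<Otimes>\<^sub>M M)) \<Otimes>\<^sub>M lborel)"
    apply (subst measurable_cong_sets[OF sets_pair_measure_cong[OF refl sets_lborel] refl])
    unfolding F_def by measurable
  have I: "(\<lambda>q. \<integral>s. F q s \<partial>lborel) \<in> borel_measurable (borel \<Otimes>\<^sub>M (borel \<Otimes>\<^sub>M M))"
    by (rule lborel.borel_measurable_lebesgue_integral) (simp add: split_beta' m)
  have I': "(\<lambda>x. \<integral>s. F (fst (fst x), snd (fst x), snd x) s \<partial>lborel) \<in> borel_measurable ((borel \<Otimes>\<^sub>M borel) \<Otimes>\<^sub>M M)"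
    using measurable_compose[OF _ I, of "\<lambda>x. (fst (fst x), snd (fst x), snd x)"] by simp
  have m2: "(\<lambda>x. exp (- lam * xi \<nu> * (T - snd (fst x))) * max 0 (\<zeta> * (Zsol r \<sigma> lam T \<nu> Wc (snd (fst x)) (fst (fst x)) (T - snd (fst x)) (snd x) - K1))
       + \<integral>s. F (fst (fst x), snd (fst x), snd x) s \<partial>lborel) \<in> borel_measurable ((borel \<Otimes>\<^sub>M borel) \<Otimes>\<^sub>M M)"
    using I' by measurable
  have J: "(\<lambda>p. \<integral>\<omega>. exp (- lam * xi \<nu> * (T - snd p)) * max 0 (\<zeta> * (Zsol r \<sigma> lam T \<nu> Wc (snd p) (fst p) (T - snd p) \<omega> - K1))
       + (\<integral>s. F (fst p, snd p, \<omega>) s \<partial>lborel) \<partial>M) \<in> borel_measurable (borel \<Otimes>\<^sub>M borel)"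
    by (rule Mp.borel_measurable_lebesgue_integral) (use m2 in \<open>simp only: split_beta'\<close>)
  have eq: "(\<lambda>p. \<integral>\<omega>. exp (- lam * xi \<nu> * (T - snd p)) * max 0 (\<zeta> * (Zsol r \<sigma> lam T \<nu> Wc (snd p) (fst p) (T - snd p) \<omega> - K1))
       + (\<integral>s. F (fst p, snd p, \<omega>) s \<partial>lborel) \<partial>M) = case_prod (Jop r \<sigma> lam T K1 \<zeta> \<nu> M Wc g)"
    by (auto simp: F_def Jop_def set_lebesgue_integral_def indicator_def intro!: ext Bochner_Integration.integral_cong)
  show ?thesis using J unfolding eq by (simp add: borel_prod)
qed


lemma nu_AE_pos: "AE y in \<nu>. 0 < y"
proof (rule AE_I'[of "{..0}"])
  show "{..0} \<in> null_sets \<nu>" using nu_neg nu_sets by (auto intro: null_setsI)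
qed auto

lemma Pop_lip:
  assumes gm: "case_prod g \<in> borel_measurable (borel :: (real \<times> real) measure)"
    and gl: "\<And>z z' t. \<bar>g z t - g z' t\<bar> \<le> \<bar>z - z'\<bar>"
  shows "\<bar>Pop r T \<nu> g z t - Pop r T \<nu> g z' t\<bar> \<le> \<bar>z - z'\<bar>"
proof -
  note gm'[measurable (raw)] = g_meas[OF gm]
  interpret nu: prob_space \<nu> by (rule nu_prob)
  have "\<bar>(\<integral>y. g (z / y + qf r T t * (y - 1) / y) t * y \<partial>\<nu>) - (\<integral>y. g (z' / y + qf r T t * (y - 1) / y) t * y \<partial>\<nu>)\<bar>
     \<le> (\<integral>y. 1 \<partial>\<nu>) * \<bar>z - z'\<bar>"
  proof (rule integral_lipschitz)
    fix z :: real
    show "(\<lambda>y. g (z / y + qf r T t * (y - 1) / y) t * y) \<in> borel_measurable \<nu>"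
      apply (subst measurable_cong_sets[OF nu_sets refl])
      unfolding qf_def by measurable
  next
    show "integrable \<nu> (\<lambda>y. 1::real)" by simp
  next
    fix z z' :: real
    show "AE y in \<nu>. \<bar>g (z / y + qf r T t * (y - 1) / y) t * y - g (z' / y + qf r T t * (y - 1) / y) t * y\<bar> \<le> 1 * \<bar>z - z'\<bar>"
      using nu_AE_pos
    proof eventually_elim
      case (elim y)
      have "\<bar>g (z / y + qf r T t * (y - 1) / y) t * y - g (z' / y + qf r T t * (y - 1) / y) t * y\<bar>
          = \<bar>g (z / y + qf r T t * (y - 1) / y) t - g (z' / y + qf r T t * (y - 1) / y) t\<bar> * y"
        using elim by (simp add: left_diff_distrib[symmetric] abs_mult)
      also have "\<dots> \<le> \<bar>(z / y + qf r T t * (y - 1) / y) - (z' / y + qf r T t * (y - 1) / y)\<bar> * y"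
        using elim by (intro mult_right_mono gl) auto
      also have "\<dots> = \<bar>z - z'\<bar>" using elim by (simp add: diff_divide_distrib[symmetric] abs_div)
      finally show ?case by simp
    qed
  qed
  then show ?thesis unfolding Pop_def by (simp add: nu.prob_space)
qed

lemma Pop_nonneg:
  assumes "\<And>z t. g z t \<ge> 0"
  shows "Pop r T \<nu> g z t \<ge> 0"
  unfolding Pop_def using nu_AE_pos
  by (intro integral_nonneg_AE) (auto elim!: eventually_mono intro!: mult_nonneg_nonneg assms)

lemma Zsol_diff: "Zsol r \<sigma> lam T \<nu> Wc t z s \<omega> - Zsol r \<sigma> lam T \<nu> Wc t z' s \<omega> = Ph s \<omega> * (z - z')"
  unfolding Zsol_def by (simp add: algebra_simps)

lemma Ph_cont: "\<omega> \<in> space M \<Longrightarrow> continuous_on A (\<lambda>s. Ph s \<omega>)"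
  unfolding Phi_def
  by (intro continuous_intros continuous_on_subset[OF Wc_cont]) auto

lemma max_lip: "\<bar>max 0 (\<zeta> * (a - K1)) - max 0 (\<zeta> * (b - K1))\<bar> \<le> \<bar>a - b\<bar>"
  using zeta by (auto simp: max_def)


lemma Jin_meas:
  assumes gm: "case_prod g \<in> borel_measurable (borel :: (real \<times> real) measure)"
  shows "(\<lambda>q. LINT s:{0..T - fst (snd q)}|lborel. exp (- lam * xi \<nu> * s) * lam *
      Pop r T \<nu> g (Zsol r \<sigma> lam T \<nu> Wc (fst (snd q)) (fst q) s (snd (snd q))) (fst (snd q) + s))
     \<in> borel_measurable (borel \<Otimes>\<^sub>M (borel \<Otimes>\<^sub>M M))"
proof -
  note gm'[measurable (raw)] = Pop_meas'[OF gm]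
  define F where "F q s = (if 0 \<le> s \<and> s \<le> T - fst (snd q) then 1 else 0) *
     (exp (- lam * xi \<nu> * s) * lam * Pop r T \<nu> g (Zsol r \<sigma> lam T \<nu> Wc (fst (snd q)) (fst q) s (snd (snd q))) (fst (snd q) + s))"
    for q :: "real \<times> real \<times> 'a" and s :: real
  have m: "(\<lambda>x. F (fst x) (snd x)) \<in> borel_measurable ((borel \<Otimes>\<^sub>M (borel \<Otimes>\<^sub>M M)) \<Otimes>\<^sub>M lborel)"
    apply (subst measurable_cong_sets[OF sets_pair_measure_cong[OF refl sets_lborel] refl])
    unfolding F_def by measurable
  have I: "(\<lambda>q. \<integral>s. F q s \<partial>lborel) \<in> borel_measurable (borel \<Otimes>\<^sub>M (borel \<Otimes>\<^sub>M M))"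
    by (rule lborel.borel_measurable_lebesgue_integral) (simp add: split_beta' m)
  moreover have "(\<lambda>q. \<integral>s. F q s \<partial>lborel) = (\<lambda>q. LINT s:{0..T - fst (snd q)}|lborel. exp (- lam * xi \<nu> * s) * lam *
      Pop r T \<nu> g (Zsol r \<sigma> lam T \<nu> Wc (fst (snd q)) (fst q) s (snd (snd q))) (fst (snd q) + s))"
    by (auto simp: F_def set_lebesgue_integral_def indicator_def intro!: ext Bochner_Integration.integral_cong)
  ultimately show ?thesis by simp
qed

lemma G2_meas:
  "(\<lambda>\<omega>. LINT s:{0..a}|lborel. exp (- lam * xi \<nu> * s) * lam * Ph s \<omega>) \<in> borel_measurable M"
proof -
  define F where "F \<omega> s = (if 0 \<le> s \<and> s \<le> a then 1 else 0) * (exp (- lam * xi \<nu> * s) * lam * Ph s \<omega>)"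
    for \<omega> :: 'a and s :: real
  have m: "(\<lambda>x. F (fst x) (snd x)) \<in> borel_measurable (M \<Otimes>\<^sub>M lborel)"
    apply (subst measurable_cong_sets[OF sets_pair_measure_cong[OF refl sets_lborel] refl])
    unfolding F_def by measurable
  have I: "(\<lambda>q. \<integral>s. F q s \<partial>lborel) \<in> borel_measurable M"
    by (rule lborel.borel_measurable_lebesgue_integral) (simp add: split_beta' m)
  moreover have "(\<lambda>q. \<integral>s. F q s \<partial>lborel) = (\<lambda>\<omega>. LINT s:{0..a}|lborel. exp (- lam * xi \<nu> * s) * lam * Ph s \<omega>)"
    by (auto simp: F_def set_lebesgue_integral_def indicator_def intro!: ext Bochner_Integration.integral_cong)
  ultimately show ?thesis by simp
qed

lemma G2_integrable:
  assumes om: "\<omega> \<in> space M"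
  shows "integrable lborel (\<lambda>s. indicator {0..a} s *\<^sub>R (exp (- lam * xi \<nu> * s) * lam * Ph s \<omega>))"
  by (rule borel_integrable_atLeastAtMost'[unfolded set_integrable_def]) (intro continuous_intros Ph_cont om)

lemma inner_lip:
  assumes gm: "case_prod g \<in> borel_measurable (borel :: (real \<times> real) measure)"
    and gl: "\<And>z z' t. \<bar>g z t - g z' t\<bar> \<le> \<bar>z - z'\<bar>"
    and om: "\<omega> \<in> space M"
  shows "\<bar>(LINT s:{0..a}|lborel. exp (- lam * xi \<nu> * s) * lam * Pop r T \<nu> g (Zsol r \<sigma> lam T \<nu> Wc t z s \<omega>) (t + s))
        - (LINT s:{0..a}|lborel. exp (- lam * xi \<nu> * s) * lam * Pop r T \<nu> g (Zsol r \<sigma> lam T \<nu> Wc t z' s \<omega>) (t + s))\<bar>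
     \<le> (LINT s:{0..a}|lborel. exp (- lam * xi \<nu> * s) * lam * Ph s \<omega>) * \<bar>z - z'\<bar>"
  unfolding set_lebesgue_integral_def
proof (rule integral_lipschitz)
  note gm'[measurable (raw)] = Pop_meas'[OF gm]
  have [measurable]: "(\<lambda>_. \<omega>) \<in> measurable borel M" using om by simp
  fix z :: real
  show "(\<lambda>s. indicator {0..a} s *\<^sub>R (exp (- lam * xi \<nu> * s) * lam * Pop r T \<nu> g (Zsol r \<sigma> lam T \<nu> Wc t z s \<omega>) (t + s)))
      \<in> borel_measurable lborel"
    apply (subst measurable_cong_sets[OF sets_lborel refl])
    by measurable
next
  show "integrable lborel (\<lambda>s. indicator {0..a} s *\<^sub>R (exp (- lam * xi \<nu> * s) * lam * Ph s \<omega>))"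
    by (rule G2_integrable[OF om])
next
  fix z z' :: real
  show "AE s in lborel. \<bar>indicator {0..a} s *\<^sub>R (exp (- lam * xi \<nu> * s) * lam * Pop r T \<nu> g (Zsol r \<sigma> lam T \<nu> Wc t z s \<omega>) (t + s))
      - indicator {0..a} s *\<^sub>R (exp (- lam * xi \<nu> * s) * lam * Pop r T \<nu> g (Zsol r \<sigma> lam T \<nu> Wc t z' s \<omega>) (t + s))\<bar>
      \<le> indicator {0..a} s *\<^sub>R (exp (- lam * xi \<nu> * s) * lam * Ph s \<omega>) * \<bar>z - z'\<bar>"
  proof (rule AE_I2)
    fix s :: real
    show "\<bar>indicator {0..a} s *\<^sub>R (exp (- lam * xi \<nu> * s) * lam * Pop r T \<nu> g (Zsol r \<sigma> lam T \<nu> Wc t z s \<omega>) (t + s))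
      - indicator {0..a} s *\<^sub>R (exp (- lam * xi \<nu> * s) * lam * Pop r T \<nu> g (Zsol r \<sigma> lam T \<nu> Wc t z' s \<omega>) (t + s))\<bar>
      \<le> indicator {0..a} s *\<^sub>R (exp (- lam * xi \<nu> * s) * lam * Ph s \<omega>) * \<bar>z - z'\<bar>"
    proof (cases "s \<in> {0..a}")
      case True
      have "\<bar>Pop r T \<nu> g (Zsol r \<sigma> lam T \<nu> Wc t z s \<omega>) (t + s) - Pop r T \<nu> g (Zsol r \<sigma> lam T \<nu> Wc t z' s \<omega>) (t + s)\<bar>
          \<le> \<bar>Zsol r \<sigma> lam T \<nu> Wc t z s \<omega> - Zsol r \<sigma> lam T \<nu> Wc t z' s \<omega>\<bar>"
        by (rule Pop_lip[OF gm gl])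
      also have "\<dots> = Ph s \<omega> * \<bar>z - z'\<bar>" unfolding Zsol_diff using Ph_pos[of s \<omega>] by (simp add: abs_mult)
      finally have "\<bar>exp (- lam * xi \<nu> * s) * lam * Pop r T \<nu> g (Zsol r \<sigma> lam T \<nu> Wc t z s \<omega>) (t + s) -
           exp (- lam * xi \<nu> * s) * lam * Pop r T \<nu> g (Zsol r \<sigma> lam T \<nu> Wc t z' s \<omega>) (t + s)\<bar>
          \<le> exp (- lam * xi \<nu> * s) * lam * (Ph s \<omega> * \<bar>z - z'\<bar>)"
        using lam by (simp add: right_diff_distrib[symmetric] abs_mult)
      then show ?thesis using True by (simp add: mult_ac)
    qed simp
  qed
qed


lemma exp_mu: "exp (- lam * xi \<nu> * s) * exp (mu * s) = exp (- lam * s)"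
  by (simp add: muc_def mult_exp_exp algebra_simps)

lemma nn_exp_interval:
  assumes a: "0 \<le> a"
  shows "(\<integral>\<^sup>+s. ennreal (indicator {0..a} s * (lam * exp (- lam * s))) \<partial>lborel) = ennreal (1 - exp (- lam * a))"
proof -
  have "((\<lambda>s. lam * exp (- lam * s)) has_integral ((- exp (- lam * a)) - (- exp (- lam * 0)))) {0..a}"
  proof (rule fundamental_theorem_of_calculus[OF a])
    fix x :: real assume "x \<in> {0..a}"
    show "((\<lambda>s. - exp (- lam * s)) has_vector_derivative lam * exp (- lam * x)) (at x within {0..a})"
      unfolding has_real_derivative_iff_has_vector_derivative[symmetric]
      by (auto intro!: derivative_eq_intros)
  qed
  then have "((\<lambda>s. lam * exp (- lam * s)) has_integral (1 - exp (- lam * a))) {0..a}" by simp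
  from nn_integral_has_integral_lebesgue[OF _ this] lam show ?thesis by simp
qed

lemma G_int:
  assumes t: "t \<le> T"
  defines "G \<equiv> \<lambda>\<omega>. exp (- lam * xi \<nu> * (T - t)) * Ph (T - t) \<omega> + (LINT s:{0..T - t}|lborel. exp (- lam * xi \<nu> * s) * lam * Ph s \<omega>)"
  shows "integrable M G" "integral\<^sup>L M G = 1"
proof -
  interpret Mp: prob_space M by (rule M_prob)
  interpret P: pair_sigma_finite lborel M by unfold_locales
  define a where "a = T - t"
  have a: "0 \<le> a" using t by (simp add: a_def)
  note G2m[measurable] = G2_meas[of a]
  have Gm[measurable]: "G \<in> borel_measurable M" unfolding G_def a_def[symmetric] by measurable
  have G2nn: "0 \<le> (LINT s:{0..a}|lborel. exp (- lam * xi \<nu> * s) * lam * Ph s \<omega>)" for \<omega>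
    unfolding set_lebesgue_integral_def using lam Ph_pos
    by (intro integral_nonneg_AE AE_I2) (auto simp: indicator_def less_imp_le)
  have Gnn: "0 \<le> G \<omega>" for \<omega>
    unfolding G_def a_def[symmetric] using G2nn[of \<omega>] Ph_pos[of a \<omega>] by (simp add: less_imp_le)
  have part1: "(\<integral>\<^sup>+\<omega>. ennreal (exp (- lam * xi \<nu> * a) * Ph a \<omega>) \<partial>M) = ennreal (exp (- lam * a))"
  proof -
    have "(\<integral>\<^sup>+\<omega>. ennreal (exp (- lam * xi \<nu> * a) * Ph a \<omega>) \<partial>M)
        = ennreal (exp (- lam * xi \<nu> * a)) * (\<integral>\<^sup>+\<omega>. ennreal (Ph a \<omega>) \<partial>M)"
      by (subst nn_integral_cmult[symmetric]) (auto simp: ennreal_mult intro!: nn_integral_cong)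
    also have "\<dots> = ennreal (exp (- lam * a))"
      using exp_mu[of a] by (simp add: E_Ph[OF a] ennreal_mult[symmetric])
    finally show ?thesis .
  qed
  have part2: "(\<integral>\<^sup>+\<omega>. ennreal (LINT s:{0..a}|lborel. exp (- lam * xi \<nu> * s) * lam * Ph s \<omega>) \<partial>M)
      = ennreal (1 - exp (- lam * a))"
  proof -
    have "(\<integral>\<^sup>+\<omega>. ennreal (LINT s:{0..a}|lborel. exp (- lam * xi \<nu> * s) * lam * Ph s \<omega>) \<partial>M)
        = (\<integral>\<^sup>+\<omega>. (\<integral>\<^sup>+s. ennreal (indicator {0..a} s * (exp (- lam * xi \<nu> * s) * lam * Ph s \<omega>)) \<partial>lborel) \<partial>M)"
    proof (intro nn_integral_cong)
      fix \<omega> assume om: "\<omega> \<in> space M"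
      show "ennreal (LINT s:{0..a}|lborel. exp (- lam * xi \<nu> * s) * lam * Ph s \<omega>)
          = (\<integral>\<^sup>+s. ennreal (indicator {0..a} s * (exp (- lam * xi \<nu> * s) * lam * Ph s \<omega>)) \<partial>lborel)"
        unfolding set_lebesgue_integral_def
        using G2_integrable[OF om, of a] lam Ph_pos
        by (subst nn_integral_eq_integral) (auto simp: indicator_def less_imp_le)
    qed
    also have "\<dots> = (\<integral>\<^sup>+s. (\<integral>\<^sup>+\<omega>. ennreal (indicator {0..a} s * (exp (- lam * xi \<nu> * s) * lam * Ph s \<omega>)) \<partial>M) \<partial>lborel)"
    proof (rule P.Fubini')
      show "(\<lambda>(s, \<omega>). ennreal (indicator {0..a} s * (exp (- lam * xi \<nu> * s) * lam * Ph s \<omega>))) \<in> borel_measurable (lborel \<Otimes>\<^sub>M M)"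
        apply (subst measurable_cong_sets[OF sets_pair_measure_cong[OF sets_lborel refl] refl])
        by measurable
    qed
    also have "\<dots> = (\<integral>\<^sup>+s. ennreal (indicator {0..a} s * (lam * exp (- lam * s))) \<partial>lborel)"
    proof (intro nn_integral_cong)
      fix s :: real
      show "(\<integral>\<^sup>+\<omega>. ennreal (indicator {0..a} s * (exp (- lam * xi \<nu> * s) * lam * Ph s \<omega>)) \<partial>M)
          = ennreal (indicator {0..a} s * (lam * exp (- lam * s)))"
      proof (cases "s \<in> {0..a}")
        case True
        then have s0: "0 \<le> s" by simp
        have "(\<integral>\<^sup>+\<omega>. ennreal (indicator {0..a} s * (exp (- lam * xi \<nu> * s) * lam * Ph s \<omega>)) \<partial>M)
            = (\<integral>\<^sup>+\<omega>. ennreal (exp (- lam * xi \<nu> * s) * lam) * ennreal (Ph s \<omega>) \<partial>M)"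
          using True lam by (intro nn_integral_cong) (simp add: ennreal_mult[symmetric])
        also have "\<dots> = ennreal (exp (- lam * xi \<nu> * s) * lam) * (\<integral>\<^sup>+\<omega>. ennreal (Ph s \<omega>) \<partial>M)"
          by (rule nn_integral_cmult) measurable
        also have "\<dots> = ennreal (indicator {0..a} s * (lam * exp (- lam * s)))"
          using True lam exp_mu[of s] by (simp add: E_Ph[OF s0] ennreal_mult[symmetric] mult_ac)
        finally show ?thesis .
      qed simp
    qed
    also have "\<dots> = ennreal (1 - exp (- lam * a))" by (rule nn_exp_interval[OF a])
    finally show ?thesis .
  qed
  have nnG: "(\<integral>\<^sup>+\<omega>. ennreal (G \<omega>) \<partial>M) = 1"
  proof -
    have "(\<integral>\<^sup>+\<omega>. ennreal (G \<omega>) \<partial>M) = (\<integral>\<^sup>+\<omega>. ennreal (exp (- lam * xi \<nu> * a) * Ph a \<omega>)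
        + ennreal (LINT s:{0..a}|lborel. exp (- lam * xi \<nu> * s) * lam * Ph s \<omega>) \<partial>M)"
      unfolding G_def a_def[symmetric] using G2nn Ph_pos
      by (intro nn_integral_cong) (simp add: ennreal_plus less_imp_le)
    also have "\<dots> = (\<integral>\<^sup>+\<omega>. ennreal (exp (- lam * xi \<nu> * a) * Ph a \<omega>) \<partial>M)
        + (\<integral>\<^sup>+\<omega>. ennreal (LINT s:{0..a}|lborel. exp (- lam * xi \<nu> * s) * lam * Ph s \<omega>) \<partial>M)"
      by (rule nn_integral_add) measurable
    also have "\<dots> = ennreal (exp (- lam * a)) + ennreal (1 - exp (- lam * a))"
      by (simp only: part1 part2)
    also have "\<dots> = 1"
      using a lam by (subst ennreal_plus[symmetric]) (auto simp: mult_nonneg_nonneg)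
    finally show ?thesis .
  qed
  show "integrable M G"
    using Gnn nnG by (intro integrableI_nonneg) auto
  show "integral\<^sup>L M G = 1"
    using Gnn nnG by (subst integral_eq_nn_integral) auto
qed


lemma Jop_lip:
  assumes gm: "case_prod g \<in> borel_measurable (borel :: (real \<times> real) measure)"
    and gl: "\<And>z z' t. \<bar>g z t - g z' t\<bar> \<le> \<bar>z - z'\<bar>"
    and t: "t \<le> T"
  shows "\<bar>Jop r \<sigma> lam T K1 \<zeta> \<nu> M Wc g z t - Jop r \<sigma> lam T K1 \<zeta> \<nu> M Wc g z' t\<bar> \<le> \<bar>z - z'\<bar>"
proof -
  define G where "G \<equiv> \<lambda>\<omega>. exp (- lam * xi \<nu> * (T - t)) * Ph (T - t) \<omega> + (LINT s:{0..T - t}|lborel. exp (- lam * xi \<nu> * s) * lam * Ph s \<omega>)"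
  have Gi: "integrable M G" and G1: "integral\<^sup>L M G = 1"
    using G_int[OF t] unfolding G_def by auto
  define h where "h z \<omega> = exp (- lam * xi \<nu> * (T - t)) * max 0 (\<zeta> * (Zsol r \<sigma> lam T \<nu> Wc t z (T - t) \<omega> - K1))
        + (LINT s:{0..T - t}|lborel. exp (- lam * xi \<nu> * s) * lam * Pop r T \<nu> g (Zsol r \<sigma> lam T \<nu> Wc t z s \<omega>) (t + s))" for z \<omega>
  have "\<bar>integral\<^sup>L M (h z) - integral\<^sup>L M (h z')\<bar> \<le> integral\<^sup>L M G * \<bar>z - z'\<bar>"
  proof (rule integral_lipschitz[OF _ Gi])
    fix z
    have I: "(\<lambda>\<omega>. LINT s:{0..T - t}|lborel. exp (- lam * xi \<nu> * s) * lam * Pop r T \<nu> g (Zsol r \<sigma> lam T \<nu> Wc t z s \<omega>) (t + s))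
        \<in> borel_measurable M"
      using measurable_compose[OF _ Jin_meas[OF gm], of "\<lambda>\<omega>. (z, t, \<omega>)" M] by simp
    show "h z \<in> borel_measurable M" unfolding h_def using I by measurable
  next
    fix z z'
    show "AE \<omega> in M. \<bar>h z \<omega> - h z' \<omega>\<bar> \<le> G \<omega> * \<bar>z - z'\<bar>"
    proof (rule AE_I2)
      fix \<omega> assume om: "\<omega> \<in> space M"
      have A: "\<bar>max 0 (\<zeta> * (Zsol r \<sigma> lam T \<nu> Wc t z (T - t) \<omega> - K1)) - max 0 (\<zeta> * (Zsol r \<sigma> lam T \<nu> Wc t z' (T - t) \<omega> - K1))\<bar>
          \<le> Ph (T - t) \<omega> * \<bar>z - z'\<bar>"
        using max_lip[of "Zsol r \<sigma> lam T \<nu> Wc t z (T - t) \<omega>" "Zsol r \<sigma> lam T \<nu> Wc t z' (T - t) \<omega>"]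
        unfolding Zsol_diff by (simp add: abs_mult)
      have A': "\<bar>exp (- lam * xi \<nu> * (T - t)) * max 0 (\<zeta> * (Zsol r \<sigma> lam T \<nu> Wc t z (T - t) \<omega> - K1))
           - exp (- lam * xi \<nu> * (T - t)) * max 0 (\<zeta> * (Zsol r \<sigma> lam T \<nu> Wc t z' (T - t) \<omega> - K1))\<bar>
          \<le> exp (- lam * xi \<nu> * (T - t)) * (Ph (T - t) \<omega> * \<bar>z - z'\<bar>)"
        using mult_left_mono[OF A, of "exp (- lam * xi \<nu> * (T - t))"]
        by (simp add: right_diff_distrib[symmetric] abs_mult)
      have B: "\<bar>(LINT s:{0..T - t}|lborel. exp (- lam * xi \<nu> * s) * lam * Pop r T \<nu> g (Zsol r \<sigma> lam T \<nu> Wc t z s \<omega>) (t + s))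
        - (LINT s:{0..T - t}|lborel. exp (- lam * xi \<nu> * s) * lam * Pop r T \<nu> g (Zsol r \<sigma> lam T \<nu> Wc t z' s \<omega>) (t + s))\<bar>
        \<le> (LINT s:{0..T - t}|lborel. exp (- lam * xi \<nu> * s) * lam * Ph s \<omega>) * \<bar>z - z'\<bar>"
        by (rule inner_lip[OF gm gl om])
      have tri: "\<And>a b c d x y :: real. \<bar>a - c\<bar> \<le> x \<Longrightarrow> \<bar>b - d\<bar> \<le> y \<Longrightarrow> \<bar>(a + b) - (c + d)\<bar> \<le> x + y"
        by arith
      have eq: "G \<omega> * \<bar>z - z'\<bar> = exp (- lam * xi \<nu> * (T - t)) * (Ph (T - t) \<omega> * \<bar>z - z'\<bar>)
          + (LINT s:{0..T - t}|lborel. exp (- lam * xi \<nu> * s) * lam * Ph s \<omega>) * \<bar>z - z'\<bar>"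
        unfolding G_def by (simp add: distrib_right mult.assoc)
      show "\<bar>h z \<omega> - h z' \<omega>\<bar> \<le> G \<omega> * \<bar>z - z'\<bar>"
        using tri[OF A' B] eq unfolding h_def by linarith
    qed
  qed
  then show ?thesis unfolding G1 h_def Jop_def by simp
qed

lemma Jop_nonneg:
  assumes gnn: "\<And>z t. g z t \<ge> 0"
  shows "Jop r \<sigma> lam T K1 \<zeta> \<nu> M Wc g z t \<ge> 0"
  unfolding Jop_def set_lebesgue_integral_def
  using lam Pop_nonneg[OF gnn]
  by (intro integral_nonneg_AE AE_I2 add_nonneg_nonneg mult_nonneg_nonneg integral_nonneg_AE) (auto simp: indicator_def)


end

context model begin

definition good :: "(real \<Rightarrow> real \<Rightarrow> real) \<Rightarrow> bool" where
  "good f \<longleftrightarrow> (\<lambda>(z, t). f z t) \<in> borel_measurable (restrict_space borel (UNIV \<times> {0..T}))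
     \<and> (\<forall>z. \<forall>t\<in>{0..T}. f z t \<ge> 0) \<and> (\<forall>z z'. \<forall>t\<in>{0..T}. \<bar>f z t - f z' t\<bar> \<le> \<bar>z - z'\<bar>)"

definition clampf :: "(real \<Rightarrow> real \<Rightarrow> real) \<Rightarrow> real \<Rightarrow> real \<Rightarrow> real" where
  "clampf f z t = f z (min T (max 0 t))"

lemma clamp_in: "min T (max 0 t) \<in> {0..T}" using T by auto

lemma clampf_props:
  assumes "good f"
  shows "case_prod (clampf f) \<in> borel_measurable (borel :: (real \<times> real) measure)"
    "\<And>z t. clampf f z t \<ge> 0" "\<And>z z' t. \<bar>clampf f z t - clampf f z' t\<bar> \<le> \<bar>z - z'\<bar>"
proof -
  have fm: "(\<lambda>(z, t). f z t) \<in> borel_measurable (restrict_space borel (UNIV \<times> {0..T}))"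
    and fnn: "\<And>z t. t \<in> {0..T} \<Longrightarrow> f z t \<ge> 0"
    and fl: "\<And>z z' t. t \<in> {0..T} \<Longrightarrow> \<bar>f z t - f z' t\<bar> \<le> \<bar>z - z'\<bar>"
    using assms unfolding good_def by auto
  have cm: "(\<lambda>p::real \<times> real. (fst p, min T (max 0 (snd p)))) \<in> measurable borel (restrict_space borel (UNIV \<times> {0..T}))"
  proof (rule measurable_restrict_space2)
    show "(\<lambda>p::real \<times> real. (fst p, min T (max 0 (snd p)))) \<in> borel \<rightarrow>\<^sub>M borel"
      by (intro borel_measurable_continuous_onI continuous_intros)
  qed (use clamp_in in auto)
  have "(\<lambda>p. (\<lambda>(z, t). f z t) (fst p, min T (max 0 (snd p)))) \<in> borel_measurable (borel :: (real \<times> real) measure)"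
    by (rule measurable_compose[OF cm fm])
  then show "case_prod (clampf f) \<in> borel_measurable (borel :: (real \<times> real) measure)"
    by (simp add: clampf_def split_beta')
  show "\<And>z t. clampf f z t \<ge> 0" unfolding clampf_def by (rule fnn[OF clamp_in])
  show "\<And>z z' t. \<bar>clampf f z t - clampf f z' t\<bar> \<le> \<bar>z - z'\<bar>" unfolding clampf_def by (rule fl[OF clamp_in])
qed

lemma Phi_eq: "0 \<le> u \<Longrightarrow> Phi m \<sigma> W u \<omega> = Phi m \<sigma> Wc u \<omega>"
  by (simp add: Phi_def Wc_def)

lemma Zsol_eq: "0 \<le> s \<Longrightarrow> Zsol r \<sigma> lam T \<nu> W t z s \<omega> = Zsol r \<sigma> lam T \<nu> Wc t z s \<omega>"
proof -
  assume s: "0 \<le> s"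
  have "(LINT u:{0..s}|lborel. dqf r T (t + u) / Phi mu \<sigma> W u \<omega>) = (LINT u:{0..s}|lborel. dqf r T (t + u) / Ph u \<omega>)"
    by (rule set_lebesgue_integral_cong) (auto simp: Phi_eq)
  then show ?thesis unfolding Zsol_def Phi_eq[OF s] by simp
qed

lemma Pop_eq: "t \<in> {0..T} \<Longrightarrow> Pop r T \<nu> f z t = Pop r T \<nu> (clampf f) z t"
proof -
  assume "t \<in> {0..T}"
  then have "min T (max 0 t) = t" by auto
  then show ?thesis unfolding Pop_def clampf_def by simp
qed

lemma Jop_eq:
  assumes t: "t \<in> {0..T}"
  shows "Jop r \<sigma> lam T K1 \<zeta> \<nu> M W f z t = Jop r \<sigma> lam T K1 \<zeta> \<nu> M Wc (clampf f) z t"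
proof -
  have e1: "Zsol r \<sigma> lam T \<nu> W t z (T - t) \<omega> = Zsol r \<sigma> lam T \<nu> Wc t z (T - t) \<omega>" for \<omega>
    using t by (intro Zsol_eq) simp
  have e2: "(LINT s:{0..T - t}|lborel. exp (- lam * xi \<nu> * s) * lam * Pop r T \<nu> f (Zsol r \<sigma> lam T \<nu> W t z s \<omega>) (t + s)) =
    (LINT s:{0..T - t}|lborel. exp (- lam * xi \<nu> * s) * lam * Pop r T \<nu> (clampf f) (Zsol r \<sigma> lam T \<nu> Wc t z s \<omega>) (t + s))" for \<omega>
  proof (rule set_lebesgue_integral_cong)
    show "\<forall>x. x \<in> {0..T - t} \<longrightarrow> exp (- lam * xi \<nu> * x) * lam * Pop r T \<nu> f (Zsol r \<sigma> lam T \<nu> W t z x \<omega>) (t + x) =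
        exp (- lam * xi \<nu> * x) * lam * Pop r T \<nu> (clampf f) (Zsol r \<sigma> lam T \<nu> Wc t z x \<omega>) (t + x)"
    proof (intro allI impI)
      fix x assume x: "x \<in> {0..T - t}"
      then have tx: "t + x \<in> {0..T}" using t by auto
      then show "exp (- lam * xi \<nu> * x) * lam * Pop r T \<nu> f (Zsol r \<sigma> lam T \<nu> W t z x \<omega>) (t + x) =
        exp (- lam * xi \<nu> * x) * lam * Pop r T \<nu> (clampf f) (Zsol r \<sigma> lam T \<nu> Wc t z x \<omega>) (t + x)"
        using Zsol_eq[of x t z \<omega>] x by (simp only: Pop_eq[OF tx, of f]) simp
    qed
  qed simp
  show ?thesis unfolding Jop_def e1 e2 ..
qed

lemma good_step:
  assumes g: "good f"
  shows "good (Jop r \<sigma> lam T K1 \<zeta> \<nu> M W f)"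
proof -
  note c = clampf_props[OF g]
  have m1: "case_prod (Jop r \<sigma> lam T K1 \<zeta> \<nu> M Wc (clampf f)) \<in> borel_measurable (restrict_space borel (UNIV \<times> {0..T}))"
    by (rule measurable_restrict_space1[OF Jop_meas[OF c(1)]])
  have "(\<lambda>(z, t). Jop r \<sigma> lam T K1 \<zeta> \<nu> M W f z t) \<in> borel_measurable (restrict_space borel (UNIV \<times> {0..T}))"
    using m1 by (rule measurable_cong[THEN iffD1, rotated]) (auto simp: space_restrict_space Jop_eq)
  moreover have "\<forall>z. \<forall>t\<in>{0..T}. Jop r \<sigma> lam T K1 \<zeta> \<nu> M W f z t \<ge> 0"
    using Jop_nonneg[OF c(2)] by (simp add: Jop_eq)
  moreover have "\<forall>z z'. \<forall>t\<in>{0..T}. \<bar>Jop r \<sigma> lam T K1 \<zeta> \<nu> M W f z t - Jop r \<sigma> lam T K1 \<zeta> \<nu> M W f z' t\<bar> \<le> \<bar>z - z'\<bar>"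
    using Jop_lip[OF c(1) c(3)] by (simp add: Jop_eq)
  ultimately show ?thesis unfolding good_def by blast
qed

lemma good_v0: "good (\<lambda>z t. max 0 (\<zeta> * (z - K1)))"
  unfolding good_def
proof (intro conjI allI ballI)
  show "(\<lambda>(z, t). max 0 (\<zeta> * (z - K1))) \<in> borel_measurable (restrict_space borel (UNIV \<times> {0..T}))"
    by (rule measurable_restrict_space1) (simp add: split_beta', intro borel_measurable_continuous_onI continuous_intros)
  fix z z' :: real
  show "\<bar>max 0 (\<zeta> * (z - K1)) - max 0 (\<zeta> * (z' - K1))\<bar> \<le> \<bar>z - z'\<bar>" by (rule max_lip)
qed auto

lemma vseq_good: "good (vseq r \<sigma> lam T K1 \<zeta> \<nu> M W n)"
proof (induction n)
  case 0 show ?case using good_v0 by (simp add: vseq_def)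
next
  case (Suc n) then show ?case using good_step by (simp add: vseq_def)
qed

lemma vseq_Suc: "vseq r \<sigma> lam T K1 \<zeta> \<nu> M W (Suc n) = Jop r \<sigma> lam T K1 \<zeta> \<nu> M W (vseq r \<sigma> lam T K1 \<zeta> \<nu> M W n)"
  by (simp add: vseq_def)

lemma xi_pos: "xi \<nu> > 0"
proof -
  interpret nu: prob_space \<nu> by (rule nu_prob)
  have nn: "AE y in \<nu>. 0 \<le> y" using nu_AE_pos by (auto elim: eventually_mono)
  have "xi \<nu> \<ge> 0" unfolding xi_def using nn by (rule integral_nonneg_AE)
  moreover have "xi \<nu> \<noteq> 0"
  proof
    assume "xi \<nu> = 0"
    then have "AE y in \<nu>. y = 0" using integral_nonneg_eq_0_iff_AE[OF nu_int nn] unfolding xi_def by simp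
    with nu_AE_pos have "AE y in \<nu>. False" by eventually_elim auto
    then show False by simp
  qed
  ultimately show ?thesis by simp
qed

end

theorem lemma4p7:
  fixes r \<sigma> lam T K1 \<zeta> U B :: real
    and \<nu> :: "real measure"
    and M :: "'a measure"
    and W :: "real \<Rightarrow> 'a \<Rightarrow> real"
  assumes "r > 0" "\<sigma> > 0" "lam > 0" "T > 0" "K1 \<ge> 0" "\<zeta> \<in> {-1, 1}"
    and "prob_space \<nu>" "sets \<nu> = sets borel" "emeasure \<nu> {..0} = 0"
    and "integrable \<nu> (\<lambda>y. y)"
    and "std_BM M W"
    and "U > 0" "B > 0"
    and hyp: "\<And>f :: real \<Rightarrow> real \<Rightarrow> real.
        (\<lambda>(z, t). f z t) \<in> borel_measurable (restrict_space borel (UNIV \<times> {0..T})) \<Longrightarrow>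
        (\<forall>z. \<forall>t\<in>{0..T}. f z t \<ge> 0) \<Longrightarrow>
        (\<forall>z z'. \<forall>t\<in>{0..T}. \<bar>f z t - f z' t\<bar> \<le> \<bar>z - z'\<bar>) \<Longrightarrow>
        (SUP t\<in>{0..T}. ereal (Jop r \<sigma> lam T K1 \<zeta> \<nu> M W f 0 t))
          \<le> ereal U + ereal (1 - exp (- lam * xi \<nu> * T))
               * ((SUP t\<in>{0..T}. ereal (f 0 t)) + ereal (B / xi \<nu>))"
  shows "\<forall>n. (SUP t\<in>{0..T}. ereal (vseq r \<sigma> lam T K1 \<zeta> \<nu> M W n 0 t))
           < ereal (U / (1 - (1 - exp (- lam * xi \<nu> * T)))
                    + (1 - exp (- lam * xi \<nu> * T)) / (1 - (1 - exp (- lam * xi \<nu> * T))) * (B / xi \<nu>)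
                    + K1)"
proof -
  have mdl: "model r \<sigma> lam T K1 \<zeta> \<nu> M W" unfolding model_def using assms(1-11) by auto
  interpret model r \<sigma> lam T K1 \<zeta> \<nu> M W by (rule mdl)
  define \<alpha> where "\<alpha> = 1 - exp (- lam * xi \<nu> * T)"
  define \<beta> where "\<beta> = B / xi \<nu>"
  define Minf where "Minf = U / (1 - \<alpha>) + \<alpha> / (1 - \<alpha>) * \<beta> + K1"
  have xp: "xi \<nu> > 0" by (rule xi_pos)
  have c0: "0 < lam * xi \<nu> * T" using xp lam T by simp
  have a0: "0 < \<alpha>" unfolding \<alpha>_def using c0 by simp
  have a1: "\<alpha> < 1" unfolding \<alpha>_def by simp
  have b0: "0 < \<beta>" unfolding \<beta>_def using xp \<open>B > 0\<close> by simp
  have key: "U + \<alpha> * \<beta> = (1 - \<alpha>) * (Minf - K1)"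
  proof -
    have "Minf - K1 = (U + \<alpha> * \<beta>) / (1 - \<alpha>)" unfolding Minf_def by (simp add: add_divide_distrib)
    then show ?thesis using a1 by simp
  qed
  have Kl: "K1 < Minf"
  proof -
    have "0 < U / (1 - \<alpha>)" using a1 \<open>U > 0\<close> by simp
    moreover have "0 \<le> \<alpha> / (1 - \<alpha>) * \<beta>" using a0 a1 b0 by simp
    ultimately show ?thesis unfolding Minf_def by simp
  qed
  have main: "(SUP t\<in>{0..T}. ereal (vseq r \<sigma> lam T K1 \<zeta> \<nu> M W n 0 t)) < ereal Minf" for n
  proof (induction n)
    case 0
    have "(SUP t\<in>{0..T}. ereal (vseq r \<sigma> lam T K1 \<zeta> \<nu> M W 0 0 t)) \<le> ereal K1"
    proof (rule SUP_least)
      fix t :: real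
      show "ereal (vseq r \<sigma> lam T K1 \<zeta> \<nu> M W 0 0 t) \<le> ereal K1"
        using zeta K1 by (auto simp: vseq_def)
    qed
    also have "\<dots> < ereal Minf" using Kl by simp
    finally show ?case .
  next
    case (Suc n)
    define f where "f = vseq r \<sigma> lam T K1 \<zeta> \<nu> M W n"
    have g: "good f" unfolding f_def by (rule vseq_good)
    define S where "S = (SUP t\<in>{0..T}. ereal (f 0 t))"
    have lb: "ereal (f 0 0) \<le> S" unfolding S_def using T by (intro SUP_upper) auto
    have f00: "0 \<le> f 0 0" using g T unfolding good_def by auto
    have ub: "S < ereal Minf" using Suc unfolding S_def f_def .
    define m where "m = real_of_ereal S"
    have Sm: "S = ereal m" unfolding m_def using lb ub by (cases S) auto
    have m0: "0 \<le> m" using lb f00 Sm by simp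
    have mM: "m < Minf" using ub Sm by simp
    have "(SUP t\<in>{0..T}. ereal (Jop r \<sigma> lam T K1 \<zeta> \<nu> M W f 0 t))
        \<le> ereal U + ereal (1 - exp (- lam * xi \<nu> * T)) * ((SUP t\<in>{0..T}. ereal (f 0 t)) + ereal (B / xi \<nu>))"
      using g unfolding good_def by (intro hyp) auto
    also have "\<dots> = ereal (U + \<alpha> * (m + \<beta>))"
      unfolding S_def[symmetric] Sm \<alpha>_def[symmetric] \<beta>_def[symmetric] by simp
    also have "\<dots> < ereal Minf"
    proof -
      have "\<alpha> * (m + \<beta>) < \<alpha> * (Minf + \<beta>)" using a0 mM by simp
      then have "U + \<alpha> * (m + \<beta>) < U + \<alpha> * \<beta> + \<alpha> * Minf" by (simp add: algebra_simps)
      also have "\<dots> = Minf - (1 - \<alpha>) * K1" unfolding key by (simp add: algebra_simps)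
      also have "\<dots> \<le> Minf" using a1 K1 by simp
      finally show ?thesis by simp
    qed
    finally show ?case unfolding f_def vseq_Suc .
  qed
  show ?thesis using main unfolding Minf_def \<alpha>_def \<beta>_def by blast
qed

end
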